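(* Let $\mathbf{B}_{t|t-1}$, $\mathbf{B}_{t|t}$, $\bm{\Lambda}_t$, $\mathbf{L}_t$ be defined as in the multi-resolution filter. Assume that $\mathbf{R}_t$ and $\mathbf{H}_t$ are block-diagonal with blocks corresponding to the finest subregions, i.e.: for $i \in \mathcal{I}_{i_1,\ldots,i_M}$ and $j \in \mathcal{I}_{j_1,\ldots,j_M}$, $\mathbf{R}_t[i,j]=0$ unless $(i_1,\ldots,i_M)=(j_1,\ldots,j_M)$; if $\mathbf{H}_t[i,j]\neq 0$ then $\mathbf{H}_t[i,k]=0$ for all $k\notin \mathcal{I}_{j_1,\ldots,j_M}$; and if $i_1,i_2\in\mathcal{I}_{j_1,\ldots,j_M}$ with $i_1<i_2$, then every $i_3$ with $i_1<i_3<i_2$ also lies in $\mathcal{I}_{j_1,\ldots,j_M}$. Then: 1. $\bm{\Lambda}_t \in \mathcal{S}(\mathbf{B}_{t|t-1}'\mathbf{B}_{t|t-1})$; 2. $\mathbf{L}_t \in \mathcal{S}(\bm{\Lambda}_t^L)$ and $\mathbf{L}_t^{-1} \in \mathcal{S}(\bm{\Lambda}_t^L)$; 3. $\mathbf{B}_{t|t} \in \mathcal{S}(\mathbf{B}_{t|t-1})$.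
   Context: Linear Gaussian state-space model $\mathbf{y}_t=\mathbf{H}_t\mathbf{x}_t+\mathbf{v}_t$, $\mathbf{v}_t\sim\mathcal{N}(\mathbf{0},\mathbf{R}_t)$, $\mathbf{x}_t=\mathbf{A}_t\mathbf{x}_{t-1}+\mathbf{w}_t$, $\mathbf{w}_t\sim\mathcal{N}(\mathbf{0},\mathbf{Q}_t)$, with state on a grid of $n_\mathcal{G}$ points in a domain $\mathcal{D}$. The domain is recursively partitioned into $J$ subregions per level up to resolution $M$, giving regions $\mathcal{D}_{j_1,\ldots,j_m}$ with grid index sets $\mathcal{I}_{j_1,\ldots,j_m}$; knot sets $\mathcal{K}_{j_1,\ldots,j_m}\subset\mathcal{I}_{j_1,\ldots,j_m}$ of size $r_m$ partition $\{1,\ldots,n_\mathcal{G}\}$; grid elements are ordered lexicographically by finest region. The multi-resolution decomposition (MRD) of a covariance matrix $\bm{\Sigma}$ returns $\mathbf{B}=(\mathbf{B}^M,\ldots,\mathbf{B}^0)$ with $\mathbf{B}^m$ block-diagonal with blocks of size $|\mathcal{I}_{j_1,\ldots,j_m}|\times r_m$. In the multi-resolution filter, $\mathbf{B}_{t|t-1}=\mathrm{MRD}(\mathbf{A}_t\mathbf{B}_{t-1|t-1}\mathbf{B}_{t-1|t-1}'\mathbf{A}_t'+\mathbf{Q}_t)$, $\bm{\Lambda}_t=\mathbf{I}_{n_\mathcal{G}}+\mathbf{B}_{t|t-1}'\mathbf{H}_t'\mathbf{R}_t^{-1}\mathbf{H}_t\mathbf{B}_{t|t-1}$, $\mathbf{L}_t$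 is the lower Cholesky triangle of $\bm{\Lambda}_t$, and $\mathbf{B}_{t|t}=\mathbf{B}_{t|t-1}(\mathbf{L}_t^{-1})'$. $\mathcal{S}(\mathbf{G})$ denotes the set of matrices whose structural zeros include those of $\mathbf{G}$; $\mathbf{G}^L$ is the lower triangle of $\mathbf{G}$. *)

theory Defs
  imports "Jordan_Normal_Form.Matrix"
begin

text \<open>Grid points and knots are indexed by 0..<n (the paper uses 1..n).
  A region D_{j_1,...,j_m} is represented by the list [j_1,...,j_m] with
  each j_k < J (the paper uses 1..J); the root region D is the empty list.\<close>

definition regions :: "nat \<Rightarrow> nat \<Rightarrow> nat list set" where
  "regions J M = {p. length p \<le> M \<and> set p \<subseteq> {..<J}}"

definition mr_partition ::
  "nat \<Rightarrow> nat \<Rightarrow> nat \<Rightarrow> (nat list \<Rightarrow> nat set) \<Rightarrow> bool" where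
  "mr_partition n J M Ireg \<longleftrightarrow>
     Ireg [] = {..<n} \<and>
     (\<forall>p \<in> regions J M. length p < M \<longrightarrow>
        Ireg p = (\<Union>j<J. Ireg (p @ [j])) \<and>
        (\<forall>j<J. \<forall>j'<J. j \<noteq> j' \<longrightarrow> Ireg (p @ [j]) \<inter> Ireg (p @ [j']) = {})) \<and>
     (\<forall>p \<in> regions J M. \<forall>q \<in> regions J M.
        length p = M \<and> length q = M \<and> (p, q) \<in> lex less_than \<longrightarrow>
        (\<forall>i \<in> Ireg p. \<forall>k \<in> Ireg q. i < k))"

definition mr_knots ::
  "nat \<Rightarrow> nat \<Rightarrow> nat \<Rightarrow> (nat list \<Rightarrow> nat set) \<Rightarrow> (nat list \<Rightarrow> nat set)
   \<Rightarrow> (nat \<Rightarrow> nat) \<Rightarrow> bool" where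
  "mr_knots n J M Ireg K r \<longleftrightarrow>
     (\<forall>p \<in> regions J M. K p \<subseteq> Ireg p \<and> card (K p) = r (length p)) \<and>
     (\<forall>p \<in> regions J M. \<forall>q \<in> regions J M. p \<noteq> q \<longrightarrow> K p \<inter> K q = {}) \<and>
     (\<Union>p \<in> regions J M. K p) = {..<n}"

text \<open>Column layout of B = (B^M, ..., B^0): column c of B belongs to the
  block of region colreg c.\<close>

definition col_order :: "nat list \<Rightarrow> nat list \<Rightarrow> bool" where
  "col_order p q \<longleftrightarrow> length q < length p \<or>
     (length p = length q \<and> (p = q \<or> (p, q) \<in> lex less_than))"

definition mr_columns ::
  "nat \<Rightarrow> nat \<Rightarrow> nat \<Rightarrow> (nat list \<Rightarrow> nat set) \<Rightarrow> (nat \<Rightarrow> nat list) \<Rightarrow> bool" where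
  "mr_columns n J M K colreg \<longleftrightarrow>
     (\<forall>c<n. colreg c \<in> regions J M) \<and>
     (\<forall>p \<in> regions J M. card {c. c < n \<and> colreg c = p} = card (K p)) \<and>
     (\<forall>c d. c < d \<and> d < n \<longrightarrow> col_order (colreg c) (colreg d))"

text \<open>A structure (pattern) is a predicate telling which entries may be
  nonzero; its complement is the set of structural zeros.\<close>

type_synonym pattern = "nat \<Rightarrow> nat \<Rightarrow> bool"

definition in_S :: "real mat \<Rightarrow> pattern \<Rightarrow> bool" where
  "in_S A P \<longleftrightarrow> (\<forall>i < dim_row A. \<forall>j < dim_col A. \<not> P i j \<longrightarrow> A $$ (i, j) = 0)"

definition pat_mult :: "nat \<Rightarrow> pattern \<Rightarrow> pattern \<Rightarrow> pattern" where
  "pat_mult k P Q = (\<lambda>i l. \<exists>j<k. P i j \<and> Q j l)"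

definition pat_trans :: "pattern \<Rightarrow> pattern" where
  "pat_trans P = (\<lambda>i j. P j i)"

definition pat_lower :: "pattern \<Rightarrow> pattern" where
  "pat_lower P = (\<lambda>i j. j \<le> i \<and> P i j)"

definition mrd_pattern :: "(nat list \<Rightarrow> nat set) \<Rightarrow> (nat \<Rightarrow> nat list) \<Rightarrow> pattern" where
  "mrd_pattern Ireg colreg = (\<lambda>i c. i \<in> Ireg (colreg c))"

definition mat_inv :: "real mat \<Rightarrow> real mat" where
  "mat_inv A = (THE B. B \<in> carrier_mat (dim_row A) (dim_row A) \<and>
                       A * B = 1\<^sub>m (dim_row A) \<and> B * A = 1\<^sub>m (dim_row A))"

definition pos_def :: "real mat \<Rightarrow> bool" where
  "pos_def A \<longleftrightarrow> A \<in> carrier_mat (dim_row A) (dim_row A) \<and> A\<^sup>T = A \<and>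
     (\<forall>x \<in> carrier_vec (dim_row A). x \<noteq> 0\<^sub>v (dim_row A) \<longrightarrow> x \<bullet> (A *\<^sub>v x) > 0)"

definition lower_cholesky :: "real mat \<Rightarrow> real mat \<Rightarrow> bool" where
  "lower_cholesky L A \<longleftrightarrow> L \<in> carrier_mat (dim_row A) (dim_row A) \<and>
     (\<forall>i < dim_row A. \<forall>j < dim_row A. i < j \<longrightarrow> L $$ (i, j) = 0) \<and>
     (\<forall>i < dim_row A. L $$ (i, i) > 0) \<and>
     L * L\<^sup>T = A"

end

theory Submission imports Defs "HOL-Library.Sublist" "Jordan_Normal_Form.Determinant" begin

lemma mat_inv_ok:
  assumes A: "A \<in> carrier_mat n n" and d: "det A \<noteq> 0"
  shows "mat_inv A \<in> carrier_mat n n \<and> A * mat_inv A = 1\<^sub>m n \<and> mat_inv A * A = 1\<^sub>m n"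
proof -
  from det_non_zero_imp_unit[OF A d, of undefined]
  obtain B where B: "B \<in> carrier_mat n n" "A * B = 1\<^sub>m n" "B * A = 1\<^sub>m n"
    unfolding Units_def by (auto simp: ring_mat_simps)
  have dr: "dim_row A = n" using A by auto
  have uniq: "C = B" if "C \<in> carrier_mat n n" "A * C = 1\<^sub>m n" "C * A = 1\<^sub>m n" for C
  proof -
    have "C = C * (A * B)" by (simp add: B(2) right_mult_one_mat[OF that(1)])
    also have "\<dots> = (C * A) * B" by (rule assoc_mult_mat[symmetric, OF that(1) A B(1)])
    also have "\<dots> = B" by (simp add: that(3) left_mult_one_mat[OF B(1)])
    finally show ?thesis .
  qed
  have "mat_inv A = B" unfolding mat_inv_def dr
    by (rule the_equality) (use B uniq in blast)+
  thus ?thesis using B by auto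
qed

lemma in_S_mult:
  assumes A: "A \<in> carrier_mat a k" and B: "B \<in> carrier_mat k b"
    and SA: "in_S A P" and SB: "in_S B Q"
  shows "in_S (A * B) (pat_mult k P Q)"
  unfolding in_S_def
proof (intro allI impI)
  fix i l assume i: "i < dim_row (A * B)" and l: "l < dim_col (A * B)" and np: "\<not> pat_mult k P Q i l"
  have "(A * B) $$ (i, l) = (\<Sum>j<k. A $$ (i, j) * B $$ (j, l))"
    using i l A B by (auto simp: scalar_prod_def lessThan_atLeast0 intro!: sum.cong)
  also have "\<dots> = 0"
  proof (rule sum.neutral, intro ballI)
    fix j assume j: "j \<in> {..<k}"
    show "A $$ (i, j) * B $$ (j, l) = 0"
    proof (cases "P i j")
      case True
      then have "\<not> Q j l" using np j unfolding pat_mult_def by auto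
      then show ?thesis using SB j l A B unfolding in_S_def by auto
    next
      case False
      then show ?thesis using SA j i A B unfolding in_S_def by auto
    qed
  qed
  finally show "(A * B) $$ (i, l) = 0" .
qed

lemma in_S_mono: "in_S A P \<Longrightarrow> (\<And>i j. i < dim_row A \<Longrightarrow> j < dim_col A \<Longrightarrow> P i j \<Longrightarrow> P' i j) \<Longrightarrow> in_S A P'"
  unfolding in_S_def by blast

lemma in_S_trans: "in_S A P \<Longrightarrow> in_S (A\<^sup>T) (pat_trans P)"
  unfolding in_S_def pat_trans_def by auto

lemma in_S_add: "A \<in> carrier_mat a b \<Longrightarrow> B \<in> carrier_mat a b \<Longrightarrow> in_S A P \<Longrightarrow> in_S B P \<Longrightarrow> in_S (A + B) P"
  unfolding in_S_def by auto

lemma in_S_one: "in_S (1\<^sub>m n) (\<lambda>i j. i = j)"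
  unfolding in_S_def by auto

lemma regions_prefix: "q \<in> regions J M \<Longrightarrow> prefix p q \<Longrightarrow> p \<in> regions J M"
  unfolding regions_def using prefix_length_le set_mono_prefix by fastforce

lemma sub_prefix:
  assumes part: "mr_partition n J M Ireg" and q: "q \<in> regions J M" and pq: "prefix p q"
  shows "Ireg q \<subseteq> Ireg p"
proof -
  obtain s where qs: "q = p @ s" using pq prefixE by blast
  have "p @ s \<in> regions J M \<Longrightarrow> Ireg (p @ s) \<subseteq> Ireg p"
  proof (induction s rule: rev_induct)
    case Nil then show ?case by simp
  next
    case (snoc j s)
    have r: "p @ s \<in> regions J M" using snoc.prems regions_prefix[of "p @ s @ [j]" J M "p @ s"] by simp
    have l: "length (p @ s) < M" and j: "j < J" using snoc.prems unfolding regions_def by auto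
    have "Ireg (p @ s) = (\<Union>j<J. Ireg (p @ s @ [j]))" using part r l unfolding mr_partition_def by auto
    then have "Ireg (p @ s @ [j]) \<subseteq> Ireg (p @ s)" using j by auto
    then show ?case using snoc.IH r by auto
  qed
  then show ?thesis using q qs by simp
qed

lemma Ireg_bound:
  assumes part: "mr_partition n J M Ireg" and q: "q \<in> regions J M"
  shows "Ireg q \<subseteq> {..<n}"
  using sub_prefix[OF part q, of "[]"] part unfolding mr_partition_def by auto

lemma disj_par:
  assumes part: "mr_partition n J M Ireg" and p: "p \<in> regions J M" and q: "q \<in> regions J M"
    and np: "\<not> prefix p q" "\<not> prefix q p"
  shows "Ireg p \<inter> Ireg q = {}"
proof -
  have "p \<parallel> q" using np unfolding parallel_def by auto
  then obtain as b bs c cs where bc: "b \<noteq> c" and pe: "p = as @ b # bs" and qe: "q = as @ c # cs"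
    using parallel_decomp by blast
  have pb: "prefix (as @ [b]) p" and qc: "prefix (as @ [c]) q" using pe qe by auto
  have ra: "as \<in> regions J M" and la: "length as < M" and b: "b < J" and c: "c < J"
    using p q pe qe unfolding regions_def by auto
  have "Ireg (as @ [b]) \<inter> Ireg (as @ [c]) = {}" using part ra la b c bc unfolding mr_partition_def by blast
  moreover have "Ireg p \<subseteq> Ireg (as @ [b])" by (rule sub_prefix[OF part p pb])
  moreover have "Ireg q \<subseteq> Ireg (as @ [c])" by (rule sub_prefix[OF part q qc])
  ultimately show ?thesis by blast
qed

lemma Rinv_block:
  fixes R X :: "real mat"
  assumes R: "R \<in> carrier_mat ny ny" and X: "X \<in> carrier_mat ny ny"
    and RX: "R * X = 1\<^sub>m ny" and XR: "X * R = 1\<^sub>m ny"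
    and blk: "\<forall>i<ny. \<forall>j<ny. obsreg i \<noteq> obsreg j \<longrightarrow> R $$ (i, j) = 0"
    and k: "k < ny" and l: "l < ny" and ne: "obsreg k \<noteq> obsreg l"
  shows "X $$ (k, l) = 0"
proof -
  define X' where "X' = mat ny ny (\<lambda>(a, b). if obsreg a = obsreg b then X $$ (a, b) else 0)"
  have X'c: "X' \<in> carrier_mat ny ny" unfolding X'_def by auto
  have "R * X' = 1\<^sub>m ny"
  proof (rule eq_matI)
    fix a b assume a: "a < dim_row (1\<^sub>m ny)" and b: "b < dim_col (1\<^sub>m ny)"
    have "(R * X') $$ (a, b) = (\<Sum>m<ny. R $$ (a, m) * X' $$ (m, b))"
      using a b R X'c by (auto simp: scalar_prod_def lessThan_atLeast0 intro!: sum.cong)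
    also have "\<dots> = (\<Sum>m<ny. if obsreg a = obsreg b then R $$ (a, m) * X $$ (m, b) else 0)"
    proof (rule sum.cong[OF refl])
      fix m assume m: "m \<in> {..<ny}"
      show "R $$ (a, m) * X' $$ (m, b) = (if obsreg a = obsreg b then R $$ (a, m) * X $$ (m, b) else 0)"
        using blk a b m unfolding X'_def by (cases "obsreg a = obsreg m") auto
    qed
    also have "\<dots> = (if obsreg a = obsreg b then (R * X) $$ (a, b) else 0)"
      using a b R X by (auto simp: scalar_prod_def lessThan_atLeast0 intro!: sum.cong)
    also have "\<dots> = 1\<^sub>m ny $$ (a, b)" using RX a b by auto
    finally show "(R * X') $$ (a, b) = 1\<^sub>m ny $$ (a, b)" .
  qed (use R X'c in auto)
  then have "X = X'"
  proof -
    assume h: "R * X' = 1\<^sub>m ny"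
    have "X = X * (R * X')" by (simp add: h right_mult_one_mat[OF X])
    also have "\<dots> = (X * R) * X'" by (rule assoc_mult_mat[symmetric, OF X R X'c])
    also have "\<dots> = X'" by (simp add: XR left_mult_one_mat[OF X'c])
    finally show ?thesis .
  qed
  then have "X $$ (k, l) = X' $$ (k, l)" by simp
  also have "\<dots> = 0" using k l ne unfolding X'_def by simp
  finally show ?thesis .
qed

lemma pd_det: assumes R: "R \<in> carrier_mat ny ny" and pd: "pos_def R" shows "det R \<noteq> 0"
proof
  assume "det R = 0"
  then obtain v where v: "v \<in> carrier_vec ny" "v \<noteq> 0\<^sub>v ny" "R *\<^sub>v v = 0\<^sub>v ny"
    using det_0_iff_vec_prod_zero[OF R] by blast
  have "v \<bullet> (R *\<^sub>v v) > 0" using pd v R unfolding pos_def_def by auto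
  then show False using v by simp
qed

theorem proposition3:
  fixes n ny J M :: nat
    and Ireg K :: "nat list \<Rightarrow> nat set" and r :: "nat \<Rightarrow> nat"
    and colreg obsreg :: "nat \<Rightarrow> nat list"
    and Bp H R L :: "real mat"
  assumes part: "mr_partition n J M Ireg"
    and knots: "mr_knots n J M Ireg K r"
    and cols: "mr_columns n J M K colreg"
    and Bp_dim: "Bp \<in> carrier_mat n n"
    and Bp_mrd: "in_S Bp (mrd_pattern Ireg colreg)"
    and H_dim: "H \<in> carrier_mat ny n"
    and R_dim: "R \<in> carrier_mat ny ny"
    and R_pd: "pos_def R"
    and obs_reg: "\<forall>i<ny. obsreg i \<in> regions J M \<and> length (obsreg i) = M"
    and R_block: "\<forall>i<ny. \<forall>j<ny. obsreg i \<noteq> obsreg j \<longrightarrow> R $$ (i, j) = 0"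
    and H_block: "\<forall>i<ny. \<forall>k<n. H $$ (i, k) \<noteq> 0 \<longrightarrow> k \<in> Ireg (obsreg i)"
    and contig: "\<forall>p \<in> regions J M. length p = M \<longrightarrow>
                   (\<forall>i1 i2 i3. i1 \<in> Ireg p \<and> i2 \<in> Ireg p \<and> i1 < i3 \<and> i3 < i2 \<longrightarrow> i3 \<in> Ireg p)"
    and chol: "lower_cholesky L (1\<^sub>m n + Bp\<^sup>T * H\<^sup>T * mat_inv R * H * Bp)"
  shows "in_S (1\<^sub>m n + Bp\<^sup>T * H\<^sup>T * mat_inv R * H * Bp)
            (pat_mult n (pat_trans (mrd_pattern Ireg colreg)) (mrd_pattern Ireg colreg))
       \<and> in_S L (pat_lower (pat_mult n (pat_trans (mrd_pattern Ireg colreg)) (mrd_pattern Ireg colreg)))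
       \<and> in_S (mat_inv L) (pat_lower (pat_mult n (pat_trans (mrd_pattern Ireg colreg)) (mrd_pattern Ireg colreg)))
       \<and> in_S (Bp * (mat_inv L)\<^sup>T) (mrd_pattern Ireg colreg)"
proof -
  let ?P = "pat_mult n (pat_trans (mrd_pattern Ireg colreg)) (mrd_pattern Ireg colreg)"
  let ?LP = "pat_lower ?P"
  define Lam where "Lam = 1\<^sub>m n + Bp\<^sup>T * H\<^sup>T * mat_inv R * H * Bp"
  have cols1: "\<forall>c<n. colreg c \<in> regions J M"
    and cols2: "\<forall>p \<in> regions J M. card {c. c < n \<and> colreg c = p} = card (K p)"
    and cols3: "\<forall>c d. c < d \<and> d < n \<longrightarrow> col_order (colreg c) (colreg d)"
    using cols unfolding mr_columns_def by blast+
  have kn1: "\<forall>p \<in> regions J M. K p \<subseteq> Ireg p \<and> card (K p) = r (length p)"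
    using knots unfolding mr_knots_def by blast
  have reg: "colreg c \<in> regions J M" if "c < n" for c using cols1 that by blast
  have lenM: "length (colreg c) \<le> M" if "c < n" for c using reg[OF that] unfolding regions_def by auto
  have lenord: "length (colreg c) \<le> length (colreg d)" if "d \<le> c" "c < n" for c d
  proof (cases "d = c")
    case False
    then have "col_order (colreg d) (colreg c)" using cols3 that by simp
    then show ?thesis unfolding col_order_def by auto
  qed simp
  have nonempty: "\<exists>i<n. i \<in> Ireg (colreg c)" if c: "c < n" for c
  proof -
    have fin: "finite {c'. c' < n \<and> colreg c' = colreg c}" by simp
    have "c \<in> {c'. c' < n \<and> colreg c' = colreg c}" using c by simp
    then have "{c'. c' < n \<and> colreg c' = colreg c} \<noteq> {}" by blast
    then have "card {c'. c' < n \<and> colreg c' = colreg c} \<noteq> 0" using fin by simp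
    moreover have "card {c'. c' < n \<and> colreg c' = colreg c} = card (K (colreg c))"
      using cols2 reg[OF c] by blast
    ultimately have "card (K (colreg c)) \<noteq> 0" by simp
    then have "K (colreg c) \<noteq> {}" by (metis card.empty)
    then obtain i where "i \<in> K (colreg c)" by blast
    then have "i \<in> Ireg (colreg c)" using kn1 reg[OF c] by blast
    then show ?thesis using Ireg_bound[OF part reg[OF c]] by blast
  qed
  have Pchar: "?P c d \<longleftrightarrow> prefix (colreg c) (colreg d) \<or> prefix (colreg d) (colreg c)"
    if c: "c < n" and d: "d < n" for c d
  proof
    assume "?P c d"
    then obtain i where "i \<in> Ireg (colreg c)" "i \<in> Ireg (colreg d)"
      unfolding pat_mult_def pat_trans_def mrd_pattern_def by auto
    then show "prefix (colreg c) (colreg d) \<or> prefix (colreg d) (colreg c)"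
      using disj_par[OF part reg[OF c] reg[OF d]] by blast
  next
    assume "prefix (colreg c) (colreg d) \<or> prefix (colreg d) (colreg c)"
    then show "?P c d"
    proof
      assume h: "prefix (colreg c) (colreg d)"
      obtain i where "i < n" "i \<in> Ireg (colreg d)" using nonempty[OF d] by auto
      then show ?thesis using sub_prefix[OF part reg[OF d] h]
        unfolding pat_mult_def pat_trans_def mrd_pattern_def by auto
    next
      assume h: "prefix (colreg d) (colreg c)"
      obtain i where "i < n" "i \<in> Ireg (colreg c)" using nonempty[OF c] by auto
      then show ?thesis using sub_prefix[OF part reg[OF c] h]
        unfolding pat_mult_def pat_trans_def mrd_pattern_def by auto
    qed
  qed
  have LPpre: "prefix (colreg c) (colreg d)" if "?LP c d" "c < n" "d < n" for c d
  proof -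
    have dc: "d \<le> c" and p: "?P c d" using that(1) unfolding pat_lower_def by auto
    have le: "length (colreg c) \<le> length (colreg d)" using lenord[OF dc that(2)] .
    from Pchar[OF that(2,3)] p show ?thesis
      using le prefix_length_prefix by blast
  qed
  have preLP: "?LP c d" if "prefix (colreg c) (colreg d)" "d \<le> c" "c < n" "d < n" for c d
    using Pchar[OF that(3,4)] that unfolding pat_lower_def by auto
  have Rdet: "det R \<noteq> 0" by (rule pd_det[OF R_dim R_pd])
  note Ri = mat_inv_ok[OF R_dim Rdet]
  have Ric: "mat_inv R \<in> carrier_mat ny ny" using Ri by auto
  have SRi: "in_S (mat_inv R) (\<lambda>k l. obsreg k = obsreg l)"
    unfolding in_S_def using Rinv_block[OF R_dim Ric _ _ R_block] Ri Ric by auto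
  have SH: "in_S H (\<lambda>i k. k \<in> Ireg (obsreg i))" unfolding in_S_def using H_dim H_block by auto
  have SBt: "in_S (Bp\<^sup>T) (pat_trans (mrd_pattern Ireg colreg))" by (rule in_S_trans[OF Bp_mrd])
  have SHt: "in_S (H\<^sup>T) (pat_trans (\<lambda>i k. k \<in> Ireg (obsreg i)))" by (rule in_S_trans[OF SH])
  have c1: "Bp\<^sup>T * H\<^sup>T \<in> carrier_mat n ny" using Bp_dim H_dim by auto
  have c2: "Bp\<^sup>T * H\<^sup>T * mat_inv R \<in> carrier_mat n ny" using c1 Ric by auto
  have c3: "Bp\<^sup>T * H\<^sup>T * mat_inv R * H \<in> carrier_mat n n" using c2 H_dim by auto
  have c4: "Bp\<^sup>T * H\<^sup>T * mat_inv R * H * Bp \<in> carrier_mat n n" using c3 Bp_dim by auto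
  have S1: "in_S (Bp\<^sup>T * H\<^sup>T) (pat_mult n (pat_trans (mrd_pattern Ireg colreg)) (pat_trans (\<lambda>i k. k \<in> Ireg (obsreg i))))"
    by (rule in_S_mult[of "Bp\<^sup>T" n n "H\<^sup>T" ny, OF _ _ SBt SHt]) (use Bp_dim H_dim in auto)
  note S2 = in_S_mult[OF c1 Ric S1 SRi]
  note S3 = in_S_mult[OF c2 H_dim S2 SH]
  note S4 = in_S_mult[OF c3 Bp_dim S3 Bp_mrd]
  have key: "prefix (colreg c) f" if "c < n" "f \<in> regions J M" "length f = M" "i \<in> Ireg (colreg c)" "i \<in> Ireg f" for c f i
  proof -
    have "prefix (colreg c) f \<or> prefix f (colreg c)" using disj_par[OF part reg[OF that(1)] that(2)] that(4,5) by blast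
    then show ?thesis using lenM[OF that(1)] that(3) prefix_length_le
      by (metis prefix_length_prefix prefix_order.order_refl)
  qed
  have S4': "in_S (Bp\<^sup>T * H\<^sup>T * mat_inv R * H * Bp) ?P"
  proof (rule in_S_mono[OF S4])
    fix c d assume c: "c < dim_row (Bp\<^sup>T * H\<^sup>T * mat_inv R * H * Bp)" and d: "d < dim_col (Bp\<^sup>T * H\<^sup>T * mat_inv R * H * Bp)"
    have c: "c < n" and d: "d < n" using c d c4 by auto
    assume "pat_mult n (pat_mult ny (pat_mult ny (pat_mult n (pat_trans (mrd_pattern Ireg colreg)) (pat_trans (\<lambda>i k. k \<in> Ireg (obsreg i)))) (\<lambda>k l. obsreg k = obsreg l)) (\<lambda>i k. k \<in> Ireg (obsreg i))) (mrd_pattern Ireg colreg) c d"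
    then obtain m l k i where m: "m < n" and l: "l < ny" and k: "k < ny" and i: "i < n"
      and h: "i \<in> Ireg (colreg c)" "i \<in> Ireg (obsreg k)" "obsreg k = obsreg l" "m \<in> Ireg (obsreg l)" "m \<in> Ireg (colreg d)"
      unfolding pat_mult_def pat_trans_def mrd_pattern_def by blast
    have f: "obsreg k \<in> regions J M" "length (obsreg k) = M" using obs_reg k by auto
    have p1: "prefix (colreg c) (obsreg k)" using key[OF c f h(1,2)] .
    have p2: "prefix (colreg d) (obsreg k)" using key[OF d f h(5)] h(3,4) by simp
    show "?P c d" using Pchar[OF c d] prefix_same_cases[OF p1 p2] by blast
  qed
  have S0: "in_S (1\<^sub>m n) ?P"
  proof (rule in_S_mono[OF in_S_one])
    fix i j assume "i < dim_row (1\<^sub>m n :: real mat)" "i = j"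
    then show "?P i j" using Pchar by auto
  qed
  have claim1: "in_S Lam ?P" unfolding Lam_def by (rule in_S_add[OF _ c4 S0 S4']) auto
  have Lamc: "Lam \<in> carrier_mat n n" unfolding Lam_def using c4 by auto
  have Lc: "L \<in> carrier_mat n n" and Llow: "\<And>i j. i < n \<Longrightarrow> j < n \<Longrightarrow> i < j \<Longrightarrow> L $$ (i, j) = 0"
    and Ldiag: "\<And>i. i < n \<Longrightarrow> L $$ (i, i) > 0" and LLT: "L * L\<^sup>T = Lam"
    using chol Lamc unfolding lower_cholesky_def Lam_def[symmetric] by auto
  have Lpat: "\<forall>c<n. \<not> ?LP c d \<longrightarrow> L $$ (c, d) = 0" if "d < n" for d
    using that
  proof (induction d rule: less_induct)
    case (less d)
    show ?case
    proof (intro allI impI)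
      fix c assume c: "c < n" and nlp: "\<not> ?LP c d"
      consider "c < d" | "c = d" | "d < c" by linarith
      then show "L $$ (c, d) = 0"
      proof cases
        case 1 then show ?thesis using Llow c less.prems by auto
      next
        case 2 then have False using nlp Pchar[OF c c] unfolding pat_lower_def by auto
        then show ?thesis ..
      next
        case 3
        have nP: "\<not> ?P c d" using nlp 3 unfolding pat_lower_def by auto
        have "Lam $$ (c, d) = 0" using claim1 nP c less.prems Lamc unfolding in_S_def by auto
        moreover have "Lam $$ (c, d) = (\<Sum>e<n. L $$ (c, e) * L $$ (d, e))"
          unfolding LLT[symmetric] using c less.prems Lc by (auto simp: scalar_prod_def lessThan_atLeast0 intro!: sum.cong)
        moreover have "(\<Sum>e<n. L $$ (c, e) * L $$ (d, e)) = L $$ (c, d) * L $$ (d, d) + (\<Sum>e\<in>{..<n} - {d}. L $$ (c, e) * L $$ (d, e))"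
          using less.prems by (subst sum.remove[of _ d]) auto
        moreover have "(\<Sum>e\<in>{..<n} - {d}. L $$ (c, e) * L $$ (d, e)) = 0"
        proof (rule sum.neutral, intro ballI)
          fix e assume e: "e \<in> {..<n} - {d}"
          show "L $$ (c, e) * L $$ (d, e) = 0"
          proof (cases "d < e")
            case True then show ?thesis using Llow e less.prems by auto
          next
            case False
            then have ed: "e < d" using e by auto
            show ?thesis
            proof (rule ccontr)
              assume "L $$ (c, e) * L $$ (d, e) \<noteq> 0"
              then have "?LP c e" "?LP d e" using less.IH[OF ed] ed less.prems c by auto
              then have p1: "prefix (colreg c) (colreg e)" and p2: "prefix (colreg d) (colreg e)"
                using LPpre c less.prems ed by auto
              have "prefix (colreg c) (colreg d)"
                using prefix_length_prefix[OF p1 p2 lenord[of d c]] 3 c by auto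
              then have "?P c d" using Pchar[OF c less.prems] by auto
              then show False using nP by auto
            qed
          qed
        qed
        ultimately have "L $$ (c, d) * L $$ (d, d) = 0" by simp
        then show ?thesis using Ldiag[OF less.prems] by auto
      qed
    qed
  qed
  have claim2a: "in_S L ?LP" unfolding in_S_def using Lpat Lc by auto
  have dL: "det L \<noteq> 0"
  proof -
    have "det L = prod_list (diag_mat L)" by (rule det_lower_triangular[OF _ Lc]) (use Llow in auto)
    moreover have "0 \<notin> set (diag_mat L)" using Ldiag Lc unfolding diag_mat_def by force
    ultimately show ?thesis by (simp add: prod_list_zero_iff)
  qed
  note Li = mat_inv_ok[OF Lc dL]
  define X where "X = mat_inv L"
  have Xc: "X \<in> carrier_mat n n" and LX: "L * X = 1\<^sub>m n" using Li unfolding X_def by auto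
  have Xpat: "\<forall>d<n. \<not> ?LP c d \<longrightarrow> X $$ (c, d) = 0" if "c < n" for c
    using that
  proof (induction c rule: less_induct)
    case (less c)
    show ?case
    proof (intro allI impI)
      fix d assume d: "d < n" and nlp: "\<not> ?LP c d"
      have cd: "c \<noteq> d" using nlp Pchar[OF d d] unfolding pat_lower_def by auto
      have "(L * X) $$ (c, d) = (\<Sum>e<n. L $$ (c, e) * X $$ (e, d))"
        using less.prems d Lc Xc by (auto simp: scalar_prod_def lessThan_atLeast0 intro!: sum.cong)
      moreover have "(L * X) $$ (c, d) = 0" using LX cd less.prems d by auto
      moreover have "(\<Sum>e<n. L $$ (c, e) * X $$ (e, d)) = L $$ (c, c) * X $$ (c, d) + (\<Sum>e\<in>{..<n} - {c}. L $$ (c, e) * X $$ (e, d))"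
        using less.prems by (subst sum.remove[of _ c]) auto
      moreover have "(\<Sum>e\<in>{..<n} - {c}. L $$ (c, e) * X $$ (e, d)) = 0"
      proof (rule sum.neutral, intro ballI)
        fix e assume e: "e \<in> {..<n} - {c}"
        show "L $$ (c, e) * X $$ (e, d) = 0"
        proof (cases "c < e")
          case True then show ?thesis using Llow e less.prems by auto
        next
          case False
          then have ec: "e < c" using e by auto
          show ?thesis
          proof (rule ccontr)
            assume "L $$ (c, e) * X $$ (e, d) \<noteq> 0"
            then have l1: "?LP c e" and l2: "?LP e d" using less.IH[OF ec] ec less.prems d Lpat[of e] by auto
            then have p1: "prefix (colreg c) (colreg e)" and p2: "prefix (colreg e) (colreg d)"
              using LPpre less.prems ec d by auto
            have "d \<le> c" using l2 ec unfolding pat_lower_def by auto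
            then have "?LP c d" using preLP[OF prefix_order.trans[OF p1 p2]] less.prems d by auto
            then show False using nlp by auto
          qed
        qed
      qed
      ultimately have "L $$ (c, c) * X $$ (c, d) = 0" by simp
      then show "X $$ (c, d) = 0" using Ldiag[OF less.prems] by auto
    qed
  qed
  have claim2b: "in_S X ?LP" unfolding in_S_def using Xpat Xc by auto
  have claim3: "in_S (Bp * X\<^sup>T) (mrd_pattern Ireg colreg)"
  proof (rule in_S_mono[OF in_S_mult[OF Bp_dim _ Bp_mrd in_S_trans[OF claim2b]]])
    show "X\<^sup>T \<in> carrier_mat n n" using Xc by auto
    fix i c assume i: "i < dim_row (Bp * X\<^sup>T)" and c: "c < dim_col (Bp * X\<^sup>T)"
    have c: "c < n" using c Xc by auto
    assume "pat_mult n (mrd_pattern Ireg colreg) (pat_trans ?LP) i c"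
    then obtain d where d: "d < n" "i \<in> Ireg (colreg d)" "?LP c d"
      unfolding pat_mult_def pat_trans_def mrd_pattern_def by blast
    have "prefix (colreg c) (colreg d)" using LPpre[OF d(3) c d(1)] .
    then show "mrd_pattern Ireg colreg i c" using sub_prefix[OF part reg[OF d(1)]] d(2)
      unfolding mrd_pattern_def by auto
  qed
  show ?thesis using claim1 claim2a claim2b claim3 unfolding Lam_def X_def by auto
qed

end
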